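(* Let $p$ be an odd prime and $r$ an integer with $1\leq r<p-1$. Then ${r+p \brace p}_{\leq r}\equiv 0\pmod p$.
   Context: For integers $N\geq k\geq0$ and $r\ge1$, the $r$-restricted Stirling number of the second kind ${N \brace k}_{\leq r}$ is $\sum \frac{N!}{\prod_{m=1}^r j_m!(m!)^{j_m}}$ over $(j_1,\dots,j_r)\in\mathbb{N}^r$ with $\sum j_m=k$, $\sum m j_m=N$; equivalently the number of partitions of an $N$-element set into $k$ nonempty blocks of size at most $r$. *)

theory Defs
  imports Complex_Main "HOL-Computational_Algebra.Primes"
begin

text \<open>Admissible index tuples (j_1,...,j_r), encoded as functions nat => nat
  vanishing outside {1..r}, with sum j_m = k and sum m*j_m = N.\<close>
definition rstir_tuples :: "nat \<Rightarrow> nat \<Rightarrow> nat \<Rightarrow> (nat \<Rightarrow> nat) set" where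
  "rstir_tuples N k r = {j. (\<forall>m. m \<notin> {1..r} \<longrightarrow> j m = 0)
      \<and> (\<Sum>m=1..r. j m) = k \<and> (\<Sum>m=1..r. m * j m) = N}"

text \<open>Each summand is an integer (a multinomial count), so the division in nat is exact;
  we compute it in the rationals to avoid relying on that.\<close>
definition rstirling :: "nat \<Rightarrow> nat \<Rightarrow> nat \<Rightarrow> rat" where
  "rstirling N k r = (\<Sum>j\<in>rstir_tuples N k r.
      fact N / (\<Prod>m=1..r. fact (j m) * (fact m) ^ (j m)))"

end

theory Submission
  imports Defs
begin

lemma fact_add_dvd: "fact a * fact b dvd (fact (a + b) :: nat)"
proof -
  have "fact a * fact (a + b - a) * ((a+b) choose a) = (fact (a + b) :: nat)"
    by (rule binomial_fact_lemma) simp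
  then show ?thesis by (metis add_diff_cancel_left' dvd_triv_left)
qed

lemma prod_fact_dvd:
  assumes "finite I"
  shows "(\<Prod>i\<in>I. fact (a i)) dvd (fact (\<Sum>i\<in>I. a i) :: nat)"
  using assms
proof (induction I rule: finite_induct)
  case empty
  then show ?case by simp
next
  case (insert x F)
  have "(\<Prod>i\<in>insert x F. fact (a i)) = (fact (a x) * (\<Prod>i\<in>F. fact (a i)) :: nat)"
    using insert by simp
  also have "\<dots> dvd fact (a x) * fact (\<Sum>i\<in>F. a i)"
    using insert by (intro mult_dvd_mono) auto
  also have "\<dots> dvd fact (a x + (\<Sum>i\<in>F. a i))" by (rule fact_add_dvd)
  finally show ?case using insert by simp
qed

lemma fact_pow_dvd: "m > 0 \<Longrightarrow> fact j * fact m ^ j dvd (fact (m * j) :: nat)"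
proof (induction j)
  case 0
  then show ?case by simp
next
  case (Suc j)
  have IH: "fact j * fact m ^ j dvd (fact (m * j) :: nat)" using Suc.IH Suc.prems by simp
  show ?case
  proof (cases m)
    case 0
    then show ?thesis using Suc.prems by simp
  next
    case (Suc k)
    define n where "n = m * j + k"
    have e1: "Suc n * (n choose k) = (Suc n choose Suc k) * Suc k"
      by (rule Suc_times_binomial_eq)
    have "Suc n = m * Suc j" "Suc k = m" using Suc n_def by auto
    hence "(m * Suc j choose m) * m = (Suc j * (n choose k)) * m"
      using e1 by (metis mult.assoc mult.commute)
    hence e2: "(m * Suc j choose m) = Suc j * (n choose k)"
      using Suc.prems by simp
    have "fact m * fact (m * Suc j - m) * (m * Suc j choose m) = (fact (m * Suc j) :: nat)"
      by (rule binomial_fact_lemma) simp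
    hence "fact (m * Suc j) = fact m * fact (m * j) * (Suc j * (n choose k))"
      using e2 by (simp add: algebra_simps)
    moreover have "fact (Suc j) * fact m ^ Suc j dvd fact m * fact (m * j) * (Suc j * (n choose k))"
    proof -
      have "fact (Suc j) * fact m ^ Suc j = fact m * (fact j * fact m ^ j) * Suc j"
        by (simp add: algebra_simps)
      also have "\<dots> dvd fact m * fact (m * j) * Suc j"
        using IH by (intro mult_dvd_mono) auto
      also have "\<dots> dvd fact m * fact (m * j) * (Suc j * (n choose k))"
        by (rule mult_dvd_mono[OF dvd_refl]) (rule dvd_triv_left)
      finally show ?thesis .
    qed
    ultimately show ?thesis by simp
  qed
qed

theorem lemma3p12:
  fixes p r :: nat
  assumes "prime p" and "odd p" and "1 \<le> r" and "r < p - 1"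
  shows "\<exists>z::int. rstirling (r + p) p r = of_int (int p * z)"
proof -
  have hterm: "\<exists>z::int. (fact (r + p) / (\<Prod>m=1..r. fact (j m) * (fact m) ^ (j m)) :: rat)
      = of_int (int p * z)" if jt: "j \<in> rstir_tuples (r + p) p r" for j
  proof -
    from jt have j0: "\<forall>m. m \<notin> {1..r} \<longrightarrow> j m = 0" and js: "(\<Sum>m=1..r. j m) = p"
      and jn: "(\<Sum>m=1..r. m * j m) = r + p" by (auto simp: rstir_tuples_def)
    define D :: nat where "D = (\<Prod>m=1..r. fact (j m) * (fact m) ^ (j m))"
    have "D dvd (\<Prod>m=1..r. fact (m * j m))"
      unfolding D_def by (rule prod_dvd_prod) (rule fact_pow_dvd, simp)
    also have "\<dots> dvd fact (\<Sum>m=1..r. m * j m)" by (rule prod_fact_dvd) simp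
    finally have Ddvd: "D dvd fact (r + p)" using jn by simp
    then obtain Q where Q: "fact (r + p) = D * Q" by blast
    have jlt: "j m < p" if "m \<in> {1..r}" for m
    proof (rule ccontr)
      assume "\<not> j m < p"
      have le: "j m \<le> p" using js that
        by (metis finite_atLeastAtMost member_le_sum zero_le)
      hence jm: "j m = p" using \<open>\<not> j m < p\<close> by simp
      have "(\<Sum>i\<in>{1..r}-{m}. j i) = 0"
        using js jm sum.remove[OF _ that, of j] by simp
      hence z: "\<forall>i\<in>{1..r}-{m}. j i = 0" by simp
      have "(\<Sum>i=1..r. i * j i) = m * j m + (\<Sum>i\<in>{1..r}-{m}. i * j i)"
        using sum.remove[OF _ that, of "\<lambda>i. i * j i"] by simp
      also have "(\<Sum>i\<in>{1..r}-{m}. i * j i) = 0" using z by simp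
      finally have "m * p = r + p" using jn jm by simp
      moreover have "1 \<le> m" "m \<le> r" using that by auto
      ultimately show False using assms(3,4)
      proof (cases "m = 1")
        case False
        with \<open>1 \<le> m\<close> have "2 * p \<le> m * p" by (intro mult_le_mono1) simp
        with \<open>m * p = r + p\<close> \<open>m \<le> r\<close> assms(4) show False by linarith
      qed (use \<open>m * p = r + p\<close> assms(3) in simp)
    qed
    have pD: "\<not> p dvd D"
      unfolding D_def
    proof
      assume "p dvd (\<Prod>m=1..r. fact (j m) * (fact m) ^ (j m))"
      then obtain m where m: "m \<in> {1..r}" "p dvd fact (j m) * (fact m) ^ (j m)"
        by (auto simp: prime_dvd_prod_iff[OF finite_atLeastAtMost assms(1)])
      hence "p dvd fact (j m) \<or> p dvd fact m"
        using assms(1) prime_dvd_mult_iff prime_dvd_power by blast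
      moreover have "m < p" using m assms(4) by auto
      ultimately show False using jlt[OF m(1)] prime_dvd_fact_iff[OF assms(1)] by auto
    qed
    have "p dvd fact (r + p)" using prime_dvd_fact_iff[OF assms(1)] by simp
    hence "p dvd Q" using Q pD assms(1) prime_dvd_mult_iff by metis
    then obtain z where z: "Q = p * z" by blast
    have Dpos: "D > 0" unfolding D_def by (simp add: prod_pos)
    have "(fact (r + p) / (\<Prod>m=1..r. fact (j m) * (fact m) ^ (j m)) :: rat)
        = of_nat (fact (r+p)) / of_nat D"
      unfolding D_def by (simp add: of_nat_fact)
    also have "\<dots> = of_nat Q" using Q Dpos by simp
    also have "\<dots> = of_int (int p * int z)" using z by simp
    finally show ?thesis by blast
  qed
  define Z where "Z j = (SOME z::int. (fact (r + p) / (\<Prod>m=1..r. fact (j m) * (fact m) ^ (j m)) :: rat)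
      = of_int (int p * z))" for j
  have ZZ: "(fact (r + p) / (\<Prod>m=1..r. fact (j m) * (fact m) ^ (j m)) :: rat) = of_int (int p * Z j)"
    if "j \<in> rstir_tuples (r + p) p r" for j
    unfolding Z_def using someI_ex[OF hterm[OF that]] .
  have "rstirling (r + p) p r = (\<Sum>j\<in>rstir_tuples (r + p) p r. of_int (int p * Z j))"
    unfolding rstirling_def using ZZ by (rule sum.cong[OF refl])
  also have "\<dots> = of_int (int p * (\<Sum>j\<in>rstir_tuples (r + p) p r. Z j))"
    by (simp add: sum_distrib_left)
  finally show ?thesis by blast
qed

end
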